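(* Let $t\ge3$, let $\mathcal C$ be an $(n,k,r,t)$-SLRC and let $G$ be a minimal repair graph of $\mathcal C$ with source set $S(G)$. Then for every $v\in S(G)$: 1) $|\mathrm{Out}(v)|\ge1$; 2) if $\mathrm{Out}(v)=\{v'\}$, then $\mathrm{Out}^2(v)=\mathrm{Out}(v')\ne\emptyset$; 3) if $\mathrm{Out}(v)=\{v_1\}$ and $\mathrm{Out}(v_1)=\{v_2\}$, then $\mathrm{Out}(v_2)\ne\emptyset$; 4) if $\mathrm{Out}(v)=\{v_1\}$ and $\mathrm{Out}(v_1)=\{v_2\}$, then $|\mathrm{Out}(u)|\ge2$ for every source $u\in\mathrm{In}(v_2)$; 5) if $v,w$ are two distinct sources with $|\mathrm{Out}(v)|=|\mathrm{Out}(w)|=1$, then $\mathrm{Out}(v)\ne\mathrm{Out}(w)$.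
   Context: For an $[n,k]$ linear code $\mathcal C$ over a finite field $\mathbb F$, a recovering set of $i\in[n]$ is a set $R\subseteq[n]\setminus\{i\}$ with nonzero $a_j\in\mathbb F$ such that $x_i=\sum_{j\in R}a_jx_j$ for all $x\in\mathcal C$; standing assumption: recovering sets have size $2\le|R|\le r<k$. $\mathcal C$ is an $(n,k,r,t)$-SLRC if every $E\subseteq[n]$ with $|E|\le t$ can be indexed $\{i_1,\dots,i_{|E|}\}$ so that each $i_\ell$ has a recovering set $R_\ell\subseteq([n]\setminus E)\cup\{i_1,\dots,i_{\ell-1}\}$. A repair graph of $\mathcal C$ is a directed acyclic graph on vertex set $[n]$ such that for every vertex $i$ with nonempty in-neighbourhood $\mathrm{In}(i)$, $\mathrm{In}(i)$ is a recovering set of $i$. A source is a vertex with no in-neighbours. A minimal repair graph is a repair graph with the minimum number of sources among all repair graphs of $\mathcal C$. $\mathrm{Out}(v)$ denotes the out-neighbours of $v$, and $\mathrm{Out}^2(v)=\bigcup_{u\in\mathrm{Out}(v)}\mathrm{Out}(u)\setminus\mathrm{Out}(v)$. *)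

theory Defs
  imports Complex_Main "HOL-Library.Function_Algebras"
begin

text \<open>Words of length n over a field are modelled as functions nat => 'a that
vanish outside the coordinate set [n] = {0..<n}.  Scalar multiplication is pointwise.\<close>

definition cscale :: "'a::field \<Rightarrow> (nat \<Rightarrow> 'a) \<Rightarrow> (nat \<Rightarrow> 'a)" where
  "cscale c x = (\<lambda>i. c * x i)"

lemma vector_space_cscale: "vector_space (cscale :: 'a::field \<Rightarrow> _)"
  by unfold_locales (auto simp: cscale_def plus_fun_def fun_eq_iff algebra_simps)

definition linear_code :: "nat \<Rightarrow> nat \<Rightarrow> (nat \<Rightarrow> 'a::field) set \<Rightarrow> bool" where
  "linear_code n k C \<longleftrightarrow>
     (\<forall>x\<in>C. \<forall>i. n \<le> i \<longrightarrow> x i = 0) \<and>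
     0 \<in> C \<and> (\<forall>x\<in>C. \<forall>y\<in>C. x + y \<in> C) \<and> (\<forall>c. \<forall>x\<in>C. cscale c x \<in> C) \<and>
     vector_space.dim cscale C = k"

definition recovering_set ::
  "nat \<Rightarrow> nat \<Rightarrow> (nat \<Rightarrow> 'a::field) set \<Rightarrow> nat \<Rightarrow> nat set \<Rightarrow> bool" where
  "recovering_set n r C i R \<longleftrightarrow>
     i < n \<and> R \<subseteq> {0..<n} - {i} \<and> 2 \<le> card R \<and> card R \<le> r \<and>
     (\<exists>a. (\<forall>j\<in>R. a j \<noteq> 0) \<and> (\<forall>x\<in>C. x i = (\<Sum>j\<in>R. a j * x j)))"

definition SLRC :: "nat \<Rightarrow> nat \<Rightarrow> nat \<Rightarrow> nat \<Rightarrow> (nat \<Rightarrow> 'a::field) set \<Rightarrow> bool" where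
  "SLRC n k r t C \<longleftrightarrow> linear_code n k C \<and> r < k \<and>
     (\<forall>E. E \<subseteq> {0..<n} \<and> card E \<le> t \<longrightarrow>
        (\<exists>es. distinct es \<and> set es = E \<and>
           (\<forall>l < length es. \<exists>R. recovering_set n r C (es ! l) R \<and>
                 R \<subseteq> ({0..<n} - E) \<union> set (take l es))))"

definition In_nb :: "(nat \<times> nat) set \<Rightarrow> nat \<Rightarrow> nat set" where
  "In_nb G v = {u. (u, v) \<in> G}"

definition Out_nb :: "(nat \<times> nat) set \<Rightarrow> nat \<Rightarrow> nat set" where
  "Out_nb G v = {u. (v, u) \<in> G}"

definition Out2 :: "(nat \<times> nat) set \<Rightarrow> nat \<Rightarrow> nat set" where
  "Out2 G v = (\<Union>u\<in>Out_nb G v. Out_nb G u) - Out_nb G v"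

definition sources :: "nat \<Rightarrow> (nat \<times> nat) set \<Rightarrow> nat set" where
  "sources n G = {v \<in> {0..<n}. In_nb G v = {}}"

definition repair_graph :: "nat \<Rightarrow> nat \<Rightarrow> (nat \<Rightarrow> 'a::field) set \<Rightarrow> (nat \<times> nat) set \<Rightarrow> bool" where
  "repair_graph n r C G \<longleftrightarrow> G \<subseteq> {0..<n} \<times> {0..<n} \<and> acyclic G \<and>
     (\<forall>i\<in>{0..<n}. In_nb G i \<noteq> {} \<longrightarrow> recovering_set n r C i (In_nb G i))"

definition minimal_repair_graph ::
  "nat \<Rightarrow> nat \<Rightarrow> (nat \<Rightarrow> 'a::field) set \<Rightarrow> (nat \<times> nat) set \<Rightarrow> bool" where
  "minimal_repair_graph n r C G \<longleftrightarrow> repair_graph n r C G \<and>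
     (\<forall>G'. repair_graph n r C G' \<longrightarrow> card (sources n G) \<le> card (sources n G'))"

end

theory Submission
  imports Defs
begin

lemma rg_props:
  assumes "repair_graph n r C G"
  shows "G \<subseteq> {0..<n} \<times> {0..<n}" "acyclic G" "\<And>a. (a,a) \<notin> G"
    "\<And>v. finite (Out_nb G v)" "\<And>v. finite (In_nb G v)"
proof -
  show g: "G \<subseteq> {0..<n} \<times> {0..<n}" "acyclic G" using assms unfolding repair_graph_def by auto
  show "\<And>a. (a,a) \<notin> G" using g(2) unfolding acyclic_def by blast
  show "\<And>v. finite (Out_nb G v)"
    by (rule finite_subset[of _ "{0..<n}"]) (use g in \<open>auto simp: Out_nb_def\<close>)
  show "\<And>v. finite (In_nb G v)"
    by (rule finite_subset[of _ "{0..<n}"]) (use g in \<open>auto simp: In_nb_def\<close>)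
qed

lemma closed_contra:
  fixes C :: "(nat \<Rightarrow> 'a::field) set"
  assumes slrc: "SLRC n k r t C" and rg: "repair_graph n r C G"
    and En: "E \<subseteq> {0..<n}" and Et: "card E \<le> t"
    and cl: "\<And>a b. a \<in> E \<Longrightarrow> (a,b) \<in> G \<Longrightarrow> b \<in> E"
    and vE: "v \<in> E" and vs: "v \<in> sources n G"
  shows "\<exists>G'. repair_graph n r C G' \<and> card (sources n G') < card (sources n G)"
proof -
  from slrc En Et obtain es where es: "distinct es" "set es = E"
    "\<forall>l < length es. \<exists>R. recovering_set n r C (es ! l) R \<and> R \<subseteq> ({0..<n} - E) \<union> set (take l es)"
    unfolding SLRC_def by blast
  from es(3) have "\<forall>l. \<exists>R. l < length es \<longrightarrow> recovering_set n r C (es ! l) R \<and> R \<subseteq> ({0..<n} - E) \<union> set (take l es)"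
    by blast
  then obtain Rf where Rf: "\<And>l. l < length es \<Longrightarrow> recovering_set n r C (es ! l) (Rf l) \<and> Rf l \<subseteq> ({0..<n} - E) \<union> set (take l es)"
    by metis
  define G' where "G' = {(a,b). (a,b) \<in> G \<and> b \<notin> E} \<union> {(j, es!l) | j l. l < length es \<and> j \<in> Rf l}"
  have In_out: "\<And>b. b \<notin> E \<Longrightarrow> In_nb G' b = In_nb G b"
    unfolding In_nb_def G'_def using es(2) by auto
  have In_in: "\<And>l. l < length es \<Longrightarrow> In_nb G' (es!l) = Rf l"
    unfolding In_nb_def G'_def using es(1,2) by (auto simp: nth_eq_iff_index_eq)
  have edge: "\<And>a b. (a,b) \<in> G' \<Longrightarrow> (b \<notin> E \<and> a \<notin> E \<and> (a,b) \<in> G) \<or> (\<exists>l. l < length es \<and> b = es!l \<and> a \<in> Rf l)"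
    unfolding G'_def using cl by auto
  have take_idx: "\<And>l a. l < length es \<Longrightarrow> a \<in> Rf l \<Longrightarrow> a \<notin> E \<or> (\<exists>m<l. a = es!m)"
  proof -
    fix l a assume l: "l < length es" and a: "a \<in> Rf l"
    show "a \<notin> E \<or> (\<exists>m<l. a = es!m)"
    proof (cases "a \<in> E")
      case True
      with Rf[OF l] a have "a \<in> set (take l es)" by auto
      then obtain m where "m < length (take l es)" "a = take l es ! m" by (auto simp: in_set_conv_nth)
      then show ?thesis by auto
    qed simp
  qed
  have acG: "acyclic G" using rg unfolding repair_graph_def by auto
  have path: "(a \<notin> E \<and> b \<notin> E \<and> (a,b) \<in> G\<^sup>+) \<or> (a \<notin> E \<and> b \<in> E) \<or> (\<exists>i j. i < j \<and> j < length es \<and> a = es!i \<and> b = es!j)"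
    if "(a,b) \<in> G'\<^sup>+" for a b
    using that
  proof (induction rule: trancl_induct)
    case (base y)
    from edge[OF base] show ?case
    proof
      assume "\<exists>l. l < length es \<and> y = es!l \<and> a \<in> Rf l"
      then obtain l where l: "l < length es" "y = es!l" "a \<in> Rf l" by blast
      from take_idx[OF l(1) l(3)] l es(2) show ?case by (auto intro: nth_mem)
    qed auto
  next
    case (step y z)
    from edge[OF step(2)] show ?case
    proof
      assume h: "z \<notin> E \<and> y \<notin> E \<and> (y, z) \<in> G"
      with step(3) es(2) show ?case by (auto intro: trancl_into_trancl)
    next
      assume "\<exists>l. l < length es \<and> z = es!l \<and> y \<in> Rf l"
      then obtain l where l: "l < length es" "z = es!l" "y \<in> Rf l" by blast
      have zE: "z \<in> E" using l es(2) by auto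
      from take_idx[OF l(1) l(3)] show ?case
      proof
        assume "y \<notin> E"
        with step(3) zE es(2) show ?case by auto
      next
        assume "\<exists>m<l. y = es!m"
        then obtain m where m: "m < l" "y = es!m" by blast
        have yE: "y \<in> E" using m l es(2) by auto
        from step(3) show ?case
        proof (elim disjE)
          assume "\<exists>i j. i < j \<and> j < length es \<and> a = es!i \<and> y = es!j"
          then obtain i j where ij: "i < j" "j < length es" "a = es!i" "y = es!j" by blast
          have "j = m" using ij m l es(1) by (simp add: nth_eq_iff_index_eq)
          with ij m have il: "i < l" by simp
          show ?case using il ij(3) l(1,2) by blast
        qed (use yE zE in auto)
      qed
    qed
  qed
  have acG': "acyclic G'"
    unfolding acyclic_def
  proof (intro allI notI)
    fix x assume "(x,x) \<in> G'\<^sup>+"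
    from path[OF this] show False
      using acG es(1) unfolding acyclic_def by (auto simp: nth_eq_iff_index_eq)
  qed
  have src: "sources n G' = sources n G - E"
  proof -
    have "b \<notin> sources n G'" if "b \<in> E" for b
    proof -
      from that es(2) obtain l where l: "l < length es" "b = es!l" by (auto simp: in_set_conv_nth)
      have "card (Rf l) \<ge> 2" using Rf[OF l(1)] unfolding recovering_set_def by auto
      then have "Rf l \<noteq> {}" by auto
      then show ?thesis using In_in[OF l(1)] l unfolding sources_def by auto
    qed
    then show ?thesis using In_out unfolding sources_def by auto
  qed
  have "card (sources n G') < card (sources n G)"
    unfolding src by (rule psubset_card_mono) (use vE vs in \<open>auto simp: sources_def\<close>)
  moreover have "repair_graph n r C G'"
    unfolding repair_graph_def
  proof (intro conjI ballI impI acG')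
    have "G \<subseteq> {0..<n} \<times> {0..<n}" using rg unfolding repair_graph_def by auto
    moreover have "Rf l \<subseteq> {0..<n}" if "l < length es" for l
      using Rf[OF that] unfolding recovering_set_def by auto
    moreover have "es ! l \<in> {0..<n}" if "l < length es" for l using nth_mem[OF that] es(2) En by auto
    ultimately show "G' \<subseteq> {0..<n} \<times> {0..<n}" unfolding G'_def by blast
  next
    fix i assume i: "i \<in> {0..<n}" "In_nb G' i \<noteq> {}"
    show "recovering_set n r C i (In_nb G' i)"
    proof (cases "i \<in> E")
      case True
      from True es(2) obtain l where l: "l < length es" "i = es!l" by (auto simp: in_set_conv_nth)
      then show ?thesis using In_in Rf by auto
    next
      case False
      then show ?thesis using In_out[OF False] i rg unfolding repair_graph_def by auto
    qed
  qed
  ultimately show ?thesis by blast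
qed


lemma flip:
  fixes C :: "(nat \<Rightarrow> 'a::field) set"
  assumes rg: "repair_graph n r C G" and us: "u \<in> sources n G" and ux: "Out_nb G u = {x}"
    and G1: "G1 = {(a,b). (a,b) \<in> G \<and> b \<noteq> x} \<union> {(a,u) | a. (a,x) \<in> G \<and> a \<noteq> u} \<union> {(x,u)}"
  shows "repair_graph n r C G1" "card (sources n G1) \<le> card (sources n G)"
    "\<And>a b. (a,b) \<in> G1 \<Longrightarrow> ((a,b) \<in> G \<and> b \<noteq> x) \<or> b = u"
    "\<And>w. w \<in> sources n G \<Longrightarrow> w \<noteq> u \<Longrightarrow> w \<in> sources n G1"
proof -
  note P = rg_props[OF rg]
  have uxG: "(u,x) \<in> G" using ux unfolding Out_nb_def by auto
  have xu: "x \<noteq> u" using uxG P(3) by auto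
  have un: "u < n" "x < n" using uxG P(1) by auto
  have Inu: "In_nb G u = {}" using us unfolding sources_def by auto
  have uout: "\<And>b. (u,b) \<in> G \<Longrightarrow> b = x" using ux unfolding Out_nb_def by auto
  define R where "R = In_nb G x"
  have uR: "u \<in> R" using uxG unfolding R_def In_nb_def by auto
  have recx: "recovering_set n r C x R" using rg un uR unfolding repair_graph_def R_def by auto
  show edge: "\<And>a b. (a,b) \<in> G1 \<Longrightarrow> ((a,b) \<in> G \<and> b \<noteq> x) \<or> b = u"
    unfolding G1 by auto
  have noout: "\<And>b. (u,b) \<notin> G1" using uout xu unfolding G1 by auto
  have In1: "\<And>b. b \<noteq> u \<Longrightarrow> b \<noteq> x \<Longrightarrow> In_nb G1 b = In_nb G b"
    unfolding In_nb_def G1 by auto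
  have In1x: "In_nb G1 x = {}" unfolding In_nb_def G1 using xu by auto
  have In1u: "In_nb G1 u = insert x (R - {u})"
    unfolding In_nb_def G1 R_def using Inu by (auto simp: In_nb_def)
  show src: "\<And>w. w \<in> sources n G \<Longrightarrow> w \<noteq> u \<Longrightarrow> w \<in> sources n G1"
  proof -
    fix w assume w: "w \<in> sources n G" "w \<noteq> u"
    have "w \<noteq> x" using w uxG unfolding sources_def In_nb_def by auto
    then show "w \<in> sources n G1" using w In1 unfolding sources_def by auto
  qed
  have "sources n G1 \<subseteq> insert x (sources n G - {u})"
  proof
    fix w assume w: "w \<in> sources n G1"
    show "w \<in> insert x (sources n G - {u})"
    proof (cases "w = u \<or> w = x")
      case True then show ?thesis using w In1u unfolding sources_def by auto
    next
      case False then show ?thesis using w In1[of w] unfolding sources_def by auto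
    qed
  qed
  then have "card (sources n G1) \<le> card (insert x (sources n G - {u}))"
    by (rule card_mono[rotated]) (auto simp: sources_def)
  also have "\<dots> \<le> Suc (card (sources n G - {u}))" by (rule card_insert_le_m1) (auto simp: card_insert_le)
  also have "\<dots> = card (sources n G)"
  proof -
    have "finite (sources n G)" by (rule finite_subset[of _ "{0..<n}"]) (auto simp: sources_def)
    then show ?thesis using us by (metis card_Suc_Diff1)
  qed
  finally show "card (sources n G1) \<le> card (sources n G)" .
  have acH: "acyclic {(a,b). (a,b) \<in> G \<and> b \<noteq> x}"
    by (rule acyclic_subset[OF P(2)]) auto
  have pth: "(a,b) \<in> {(a,b). (a,b) \<in> G \<and> b \<noteq> x}\<^sup>+ \<or> b = u" if "(a,b) \<in> G1\<^sup>+" for a b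
    using that
  proof (induction rule: trancl_induct)
    case (base y) then show ?case using edge by blast
  next
    case (step y z)
    show ?case
    proof (cases "y = u")
      case True then show ?thesis using noout step(2) by auto
    next
      case False
      with step(3) have "(a,y) \<in> {(a,b). (a,b) \<in> G \<and> b \<noteq> x}\<^sup>+" by auto
      with edge[OF step(2)] show ?thesis by (auto intro: trancl_into_trancl)
    qed
  qed
  have ac1: "acyclic G1" unfolding acyclic_def
  proof (intro allI notI)
    fix y assume h: "(y,y) \<in> G1\<^sup>+"
    show False
    proof (cases "y = u")
      case True
      from h True obtain c where "(u,c) \<in> G1" by (auto dest: tranclD)
      with noout show False by auto
    next
      case False
      with pth[OF h] acH show False unfolding acyclic_def by auto
    qed
  qed
  have recu: "recovering_set n r C u (insert x (R - {u}))"
  proof -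
    have finR: "finite R" unfolding R_def by (rule P(5))
    have xR: "x \<notin> R" using recx unfolding recovering_set_def by auto
    from recx obtain a where a: "\<forall>j\<in>R. a j \<noteq> 0" "\<forall>y\<in>C. y x = (\<Sum>j\<in>R. a j * y j)"
      unfolding recovering_set_def by blast
    have cardeq: "card (insert x (R - {u})) = card R"
      using finR xR uR by (simp add: card_gt_0_iff; metis card_gt_0_iff Suc_pred empty_iff)
    define a' where "a' = (\<lambda>j. if j = x then inverse (a u) else - a j / a u)"
    have au: "a u \<noteq> 0" using a(1) uR by auto
    have "\<forall>j\<in>insert x (R - {u}). a' j \<noteq> 0"
      using a(1) au xR unfolding a'_def by auto
    moreover have "\<forall>y\<in>C. y u = (\<Sum>j\<in>insert x (R - {u}). a' j * y j)"
    proof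
      fix y assume yC: "y \<in> C"
      have s1: "y x = a u * y u + (\<Sum>j\<in>R - {u}. a j * y j)"
        using a(2) yC sum.remove[OF finR uR, of "\<lambda>j. a j * y j"] by simp
      have "(\<Sum>j\<in>insert x (R - {u}). a' j * y j) = a' x * y x + (\<Sum>j\<in>R - {u}. a' j * y j)"
        using finR xR by simp
      also have "(\<Sum>j\<in>R - {u}. a' j * y j) = (\<Sum>j\<in>R - {u}. - (a j * y j) / a u)"
        using xR by (intro sum.cong) (auto simp: a'_def)
      also have "\<dots> = - (\<Sum>j\<in>R - {u}. a j * y j) / a u"
        by (simp add: sum_divide_distrib[symmetric] sum_negf)
      also have "a' x * y x = y x / a u" by (simp add: a'_def divide_inverse mult.commute)
      finally show "y u = (\<Sum>j\<in>insert x (R - {u}). a' j * y j)"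
        using s1 au by (simp add: field_simps)
    qed
    ultimately show ?thesis
      using recx un xu cardeq unfolding recovering_set_def by auto
  qed
  show "repair_graph n r C G1"
    unfolding repair_graph_def
  proof (intro conjI ballI impI ac1)
    show "G1 \<subseteq> {0..<n} \<times> {0..<n}" using P(1) un unfolding G1 by auto
  next
    fix i assume i: "i \<in> {0..<n}" "In_nb G1 i \<noteq> {}"
    show "recovering_set n r C i (In_nb G1 i)"
    proof -
      consider "i = u" | "i = x" | "i \<noteq> u" "i \<noteq> x" by blast
      then show ?thesis
      proof cases
        case 1 then show ?thesis using recu In1u by simp
      next
        case 2 then show ?thesis using In1x i by simp
      next
        case 3 then show ?thesis using In1[OF 3] i rg unfolding repair_graph_def by auto
      qed
    qed
  qed
qed


theorem corollary1:
  fixes C :: "(nat \<Rightarrow> 'a::{field,finite}) set"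
    and n k r t :: nat and G :: "(nat \<times> nat) set"
  assumes "t \<ge> 3"
    and "SLRC n k r t C"
    and "minimal_repair_graph n r C G"
  shows "\<forall>v \<in> sources n G.
     card (Out_nb G v) \<ge> 1 \<and>
     (\<forall>v'. Out_nb G v = {v'} \<longrightarrow> Out2 G v = Out_nb G v' \<and> Out_nb G v' \<noteq> {}) \<and>
     (\<forall>v1 v2. Out_nb G v = {v1} \<and> Out_nb G v1 = {v2} \<longrightarrow> Out_nb G v2 \<noteq> {}) \<and>
     (\<forall>v1 v2. Out_nb G v = {v1} \<and> Out_nb G v1 = {v2} \<longrightarrow>
        (\<forall>u \<in> sources n G \<inter> In_nb G v2. card (Out_nb G u) \<ge> 2)) \<and>
     (\<forall>w \<in> sources n G. w \<noteq> v \<and> card (Out_nb G v) = 1 \<and> card (Out_nb G w) = 1 \<longrightarrow>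
        Out_nb G v \<noteq> Out_nb G w)"
proof -
  have rg: "repair_graph n r C G" and mn: "\<And>G'. repair_graph n r C G' \<Longrightarrow> card (sources n G) \<le> card (sources n G')"
    using assms(3) unfolding minimal_repair_graph_def by auto
  note P = rg_props[OF rg]
  have nb: False if "repair_graph n r C G'" "card (sources n G') < card (sources n G)" for G'
    using mn[OF that(1)] that(2) by simp
  have inn: "a < n" "b < n" if "(a,b) \<in> G" for a b using that P(1) by auto
  have cl: False if "E \<subseteq> {0..<n}" "card E \<le> 3" "\<And>a b. a \<in> E \<Longrightarrow> (a,b) \<in> G \<Longrightarrow> b \<in> E"
      "v \<in> E" "v \<in> sources n G" for E v
    using closed_contra[OF assms(2) rg that(1) _ that(3-5)] that(2) assms(1) nb by force
  have cl1: False if "E \<subseteq> {0..<n}" "card E \<le> 3" "\<And>a b. a \<in> E \<Longrightarrow> (a,b) \<in> H \<Longrightarrow> b \<in> E"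
      "v \<in> E" "v \<in> sources n H" "repair_graph n r C H" "card (sources n H) \<le> card (sources n G)" for E v H
    using closed_contra[OF assms(2) that(6) that(1) _ that(3-5)] that(2,7) assms(1) nb by force
  have c3: "card {a,b,c::nat} \<le> 3" for a b c by (simp add: card_insert_if)
  have srcn: "v < n" if "v \<in> sources n G" for v using that unfolding sources_def by auto
  have A1: "Out_nb G v \<noteq> {}" if vs: "v \<in> sources n G" for v
  proof
    assume h: "Out_nb G v = {}"
    show False
      by (rule cl[where E="{v}" and v=v]) (use h vs srcn[OF vs] in \<open>auto simp: Out_nb_def\<close>)
  qed
  have A2: "Out_nb G v' \<noteq> {}" if vs: "v \<in> sources n G" and o: "Out_nb G v = {v'}" for v v'
  proof
    assume h: "Out_nb G v' = {}"
    have "(v,v') \<in> G" using o unfolding Out_nb_def by auto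
    then have "v' < n" using inn by auto
    show False
      by (rule cl[where E="{v,v'}" and v=v]) (use h vs srcn[OF vs] o \<open>v' < n\<close> c3[of v v' v'] in \<open>auto simp: Out_nb_def\<close>)
  qed
  have A3: "Out_nb G v2 \<noteq> {}" if vs: "v \<in> sources n G" and o: "Out_nb G v = {v1}" "Out_nb G v1 = {v2}" for v v1 v2
  proof
    assume h: "Out_nb G v2 = {}"
    have "(v,v1) \<in> G" "(v1,v2) \<in> G" using o unfolding Out_nb_def by auto
    then have "v1 < n" "v2 < n" using inn by auto
    show False
      by (rule cl[where E="{v,v1,v2}" and v=v]) (use h vs srcn[OF vs] o \<open>v1 < n\<close> \<open>v2 < n\<close> c3[of v v1 v2] in \<open>auto simp: Out_nb_def\<close>)
  qed
  have A4: "card (Out_nb G u) \<ge> 2" if vs: "v \<in> sources n G" and o: "Out_nb G v = {v1}" "Out_nb G v1 = {v2}"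
    and us: "u \<in> sources n G" and uv2: "u \<in> In_nb G v2" for v v1 v2 u
  proof (rule ccontr)
    assume "\<not> card (Out_nb G u) \<ge> 2"
    moreover have "v2 \<in> Out_nb G u" using uv2 unfolding In_nb_def Out_nb_def by auto
    ultimately have ou: "Out_nb G u = {v2}" using P(4)[of u]
      by (metis One_nat_def card_1_singletonE card_gt_0_iff empty_iff le_simps(3) nat_less_le not_le numeral_2_eq_2 singletonD)
    have e: "(v,v1) \<in> G" "(v1,v2) \<in> G" "(u,v2) \<in> G" using o ou unfolding Out_nb_def by auto
    then have n12: "v1 < n" "v2 < n" "u < n" using inn by auto
    have "v1 \<noteq> v2" using e P(3) by auto
    then have uv: "u \<noteq> v" using o ou by auto
    define G1 where "G1 = {(a,b). (a,b) \<in> G \<and> b \<noteq> v2} \<union> {(a,u) | a. (a,v2) \<in> G \<and> a \<noteq> u} \<union> {(v2,u)}"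
    note F = flip[OF rg us ou G1_def]
    have vs1: "v \<in> sources n G1" using F(4)[OF vs] uv by auto
    show False
    proof (rule cl1[where E="{v,v1,u}" and v=v and H=G1, OF _ c3 _ _ vs1 F(1) F(2)])
      show "{v, v1, u} \<subseteq> {0..<n}" using srcn[OF vs] n12 by auto
    next
      fix a b assume "a \<in> {v,v1,u}" "(a,b) \<in> G1"
      then show "b \<in> {v,v1,u}" using F(3)[of a b] o ou unfolding Out_nb_def by auto
    qed auto
  qed
  have A5: "Out_nb G v \<noteq> Out_nb G w" if vs: "v \<in> sources n G" and ws: "w \<in> sources n G" and wv: "w \<noteq> v"
    and c: "card (Out_nb G v) = 1" "card (Out_nb G w) = 1" for v w
  proof
    assume eq: "Out_nb G v = Out_nb G w"
    from c(2) obtain x where ow: "Out_nb G w = {x}" by (auto simp: card_Suc_eq)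
    have e: "(w,x) \<in> G" using ow unfolding Out_nb_def by auto
    define G1 where "G1 = {(a,b). (a,b) \<in> G \<and> b \<noteq> x} \<union> {(a,w) | a. (a,x) \<in> G \<and> a \<noteq> w} \<union> {(x,w)}"
    note F = flip[OF rg ws ow G1_def]
    have vs1: "v \<in> sources n G1" using F(4)[OF vs] wv by auto
    show False
    proof (rule cl1[where E="{v,w}" and v=v and H=G1, OF _ _ _ _ vs1 F(1) F(2)])
      show "{v, w} \<subseteq> {0..<n}" using srcn[OF vs] srcn[OF ws] by auto
      show "card {v,w} \<le> 3" using c3[of v w w] by simp
    next
      fix a b assume "a \<in> {v,w}" "(a,b) \<in> G1"
      then show "b \<in> {v,w}" using F(3)[of a b] eq ow unfolding Out_nb_def by auto
    qed auto
  qed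
  show ?thesis
  proof (intro ballI conjI allI impI)
    fix v assume vs: "v \<in> sources n G"
    show "card (Out_nb G v) \<ge> 1" using A1[OF vs] P(4)[of v] by (simp add: Suc_le_eq card_gt_0_iff)
    fix v' assume o: "Out_nb G v = {v'}"
    have "v' \<notin> Out_nb G v'" using P(3) unfolding Out_nb_def by auto
    then show "Out2 G v = Out_nb G v'" using o unfolding Out2_def by auto
    show "Out_nb G v' \<noteq> {}" using A2[OF vs o] .
  next
    fix v v1 v2 assume "v \<in> sources n G" "Out_nb G v = {v1} \<and> Out_nb G v1 = {v2}"
    then show "Out_nb G v2 \<noteq> {}" using A3 by blast
  next
    fix v v1 v2 u assume "v \<in> sources n G" "Out_nb G v = {v1} \<and> Out_nb G v1 = {v2}"
      "u \<in> sources n G \<inter> In_nb G v2"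
    then show "card (Out_nb G u) \<ge> 2" using A4 by blast
  next
    fix v w assume "v \<in> sources n G" "w \<in> sources n G"
      "w \<noteq> v \<and> card (Out_nb G v) = 1 \<and> card (Out_nb G w) = 1"
    then show "Out_nb G v \<noteq> Out_nb G w" using A5 by blast
  qed
qed

end
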